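(* Consider the Kakutani interval splitting process with cutoff $x_c\in(0,1)$: start with $(0,1)$; at each step the current largest subinterval is split into two pieces by a division point uniformly distributed in it (independently of the past); subintervals of length at most $x_c$ are not split further, and the process stops when all subintervals have length at most $x_c$; let $n$ be the total number of splits. Fix $y\in(0,1)$ and let $K$ be the number of splits, during the process, of a subinterval containing the point $y$ (the "$y$-subintervals") before the subinterval containing $y$ has length at most $x_c$. Then, with high probability, $K=\sim\!\log n$, i.e. $K$ is at most of order $\log n$ (equivalently of order $\log(1/x_c)$): for every $A>0$ there is a constant $C_A$ such that $K\le C_A\log(1/x_c)$ except on an event of probability at most of order $x_c^{A}$.
   Context: The process ends with $n+1$ subintervals all of length at most $x_c$, and $1/x_c$ is of the same order as $n$ (up to constants), so $\log n$ and $\log(1/x_c)$ are comparable; asymptotics are as $x_c\to0$. *)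

theory Defs
  imports "HOL-Probability.Probability"
begin

text \<open>At step j the current largest subinterval (a,b) (ties broken by list order)
  is split at the point a + u j * (b - a); if u j is uniform on [0,1] and independent
  of the past, this division point is uniform in (a,b).\<close>

definition ilen :: "real \<times> real \<Rightarrow> real" where
  "ilen I = snd I - fst I"

definition largest :: "(real \<times> real) list \<Rightarrow> real \<times> real" where
  "largest S = hd (filter (\<lambda>I. ilen I = Max (ilen ` set S)) S)"

definition stopped :: "real \<Rightarrow> (real \<times> real) list \<Rightarrow> bool" where
  "stopped xc S \<longleftrightarrow> (\<forall>I\<in>set S. ilen I \<le> xc)"

definition split_at :: "real \<Rightarrow> real \<times> real \<Rightarrow> (real \<times> real) list" where
  "split_at t I = [(fst I, fst I + t * ilen I), (fst I + t * ilen I, snd I)]"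

primrec kak_state :: "real \<Rightarrow> (nat \<Rightarrow> real) \<Rightarrow> nat \<Rightarrow> (real \<times> real) list" where
  "kak_state xc u 0 = [(0, 1)]"
| "kak_state xc u (Suc j) =
     (let S = kak_state xc u j in
      if stopped xc S then S
      else remove1 (largest S) S @ split_at (u j) (largest S))"

definition kak_K :: "real \<Rightarrow> real \<Rightarrow> (nat \<Rightarrow> real) \<Rightarrow> nat" where
  "kak_K xc y u = card {j. \<not> stopped xc (kak_state xc u j) \<and>
       fst (largest (kak_state xc u j)) < y \<and> y < snd (largest (kak_state xc u j))}"

end

theory Submission
  imports Defs
begin

definition coord :: "nat \<Rightarrow> (real \<times> real) list \<Rightarrow> real \<times> real" where
  "coord i S = (if i < length S then S ! i else (0,0))"

definition BB :: "(real \<times> real) list \<Rightarrow> nat \<Rightarrow> bool" where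
  "BB S i \<longleftrightarrow> i < length S \<and> (\<forall>k<length S. ilen (coord k S) \<le> ilen (coord i S))"

definition mm :: "(real \<times> real) list \<Rightarrow> nat" where
  "mm S = (if S = [] then 0 else LEAST i. BB S i)"

lemma BB_ex: "S \<noteq> [] \<Longrightarrow> \<exists>i. BB S i"
proof -
  assume "S \<noteq> []"
  then have "ilen ` set S \<noteq> {}" by simp
  then have "Max (ilen ` set S) \<in> ilen ` set S" by (intro Max_in) auto
  then obtain I where I: "I \<in> set S" "ilen I = Max (ilen ` set S)"
    by (metis imageE)
  then obtain i where i: "i < length S" "S ! i = I" by (auto simp: in_set_conv_nth)
  have "BB S i" unfolding BB_def coord_def using i I
    by (auto intro!: Max_ge)
  then show ?thesis by blast
qed

lemma mm_props:
  assumes "S \<noteq> []"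
  shows "BB S (mm S)" "\<And>i. i < mm S \<Longrightarrow> \<not> BB S i" "mm S < length S"
proof -
  obtain i where "BB S i" using BB_ex[OF assms] by blast
  then show "BB S (mm S)" unfolding mm_def using assms by (auto intro: LeastI)
  then show "mm S < length S" unfolding BB_def by simp
  fix i assume "i < mm S" then show "\<not> BB S i" unfolding mm_def using assms
    using not_less_Least by auto
qed

lemma P_iff_BB:
  assumes "i < length S"
  shows "(ilen (S ! i) = Max (ilen ` set S)) \<longleftrightarrow> BB S i"
proof -
  have fin: "finite (ilen ` set S)" and ne: "ilen ` set S \<noteq> {}" using assms by auto
  have "(ilen (S ! i) = Max (ilen ` set S)) \<longleftrightarrow> (\<forall>J\<in>set S. ilen J \<le> ilen (S ! i))"
    using assms fin ne by (auto intro!: antisym Max_ge Max.boundedI)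
  also have "\<dots> \<longleftrightarrow> BB S i" unfolding BB_def coord_def using assms
    by (simp add: all_set_conv_all_nth)
  finally show ?thesis .
qed

lemma largest_eq:
  assumes "S \<noteq> []"
  shows "largest S = S ! mm S"
proof -
  let ?P = "\<lambda>I. ilen I = Max (ilen ` set S)"
  let ?a = "mm S"
  have a: "?a < length S" using mm_props[OF assms] by auto
  have S: "S = take ?a S @ S ! ?a # drop (Suc ?a) S" using a by (simp add: id_take_nth_drop)
  have "filter ?P (take ?a S) = []"
  proof (rule filter_False, intro ballI)
    fix x assume "x \<in> set (take ?a S)"
    then obtain i where "i < ?a" "x = S ! i" using a by (auto simp: in_set_conv_nth)
    then show "\<not> ?P x" using P_iff_BB[of i S] mm_props[OF assms] a by auto
  qed
  moreover have "?P (S ! ?a)" using P_iff_BB[OF a] mm_props[OF assms] by auto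
  ultimately have "filter ?P S = S ! ?a # filter ?P (drop (Suc ?a) S)"
    by (subst S) simp
  then show ?thesis unfolding largest_def by simp
qed

lemma remove1_eq:
  assumes "S \<noteq> []"
  shows "remove1 (largest S) S = take (mm S) S @ drop (Suc (mm S)) S"
proof -
  let ?a = "mm S"
  have a: "?a < length S" using mm_props[OF assms] by auto
  have S: "S = take ?a S @ S ! ?a # drop (Suc ?a) S" using a by (simp add: id_take_nth_drop)
  have "S ! ?a \<notin> set (take ?a S)"
  proof
    assume "S ! ?a \<in> set (take ?a S)"
    then obtain i where i: "i < ?a" "S ! ?a = S ! i" using a by (auto simp: in_set_conv_nth)
    have "BB S ?a" using mm_props[OF assms] by auto
    then have "BB S i" using i a unfolding BB_def coord_def by auto
    then show False using mm_props(2)[OF assms i(1)] by auto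
  qed
  then have "remove1 (S ! ?a) (take ?a S @ S ! ?a # drop (Suc ?a) S) = take ?a S @ drop (Suc ?a) S"
    by (simp add: remove1_append)
  moreover have "remove1 (S ! ?a) S = remove1 (S ! ?a) (take ?a S @ S ! ?a # drop (Suc ?a) S)"
    by (rule arg_cong[where f="remove1 (S ! ?a)"], rule S)
  ultimately show ?thesis unfolding largest_eq[OF assms] by simp
qed

definition stepS :: "real \<Rightarrow> (real \<times> real) list \<Rightarrow> (real \<times> real) list" where
  "stepS t S = remove1 (largest S) S @ split_at t (largest S)"

lemma length_stepS: "S \<noteq> [] \<Longrightarrow> length (stepS t S) = Suc (length S)"
  unfolding stepS_def using remove1_eq[of S] mm_props(3)[of S] by (simp add: split_at_def)

lemma coord_stepS:
  assumes "S \<noteq> []"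
  shows "coord i (stepS t S) =
    (if i + 1 < length S then coord (if i < mm S then i else Suc i) S
     else if i + 1 = length S then (fst (coord (mm S) S), fst (coord (mm S) S) + t * ilen (coord (mm S) S))
     else if i = length S then (fst (coord (mm S) S) + t * ilen (coord (mm S) S), snd (coord (mm S) S))
     else (0,0))"
proof -
  let ?a = "mm S"
  have a: "?a < length S" using mm_props[OF assms] by auto
  have e: "stepS t S = take ?a S @ drop (Suc ?a) S @ split_at t (S ! ?a)"
    using remove1_eq[OF assms, unfolded largest_eq[OF assms]] unfolding stepS_def largest_eq[OF assms] by simp
  have ca: "coord ?a S = S ! ?a" using a by (simp add: coord_def)
  show ?thesis using a unfolding e ca
    by (auto simp: coord_def nth_append split_at_def min_def nth_Cons' not_less)
qed

definition good :: "'a measure \<Rightarrow> ('a \<Rightarrow> (real \<times> real) list) \<Rightarrow> bool" where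
  "good M \<Phi> \<longleftrightarrow> (\<lambda>x. length (\<Phi> x)) \<in> measurable M (count_space UNIV) \<and>
     (\<forall>i. (\<lambda>x. fst (coord i (\<Phi> x))) \<in> borel_measurable M) \<and>
     (\<forall>i. (\<lambda>x. snd (coord i (\<Phi> x))) \<in> borel_measurable M)"

lemma nat_fun_meas:
  fixes f :: "'a \<Rightarrow> nat"
  assumes "f \<in> measurable M (count_space UNIV)"
  shows "(\<lambda>x. g (f x)) \<in> measurable M (count_space UNIV)"
  by (rule measurable_compose[OF assms]) simp

lemma stopped_coord: "stopped xc S \<longleftrightarrow> (\<forall>i. i < length S \<longrightarrow> ilen (coord i S) \<le> xc)"
  unfolding stopped_def coord_def by (simp add: all_set_conv_all_nth)

lemma good_len: "good M \<Phi> \<Longrightarrow> (\<lambda>x. length (\<Phi> x)) \<in> measurable M (count_space UNIV)"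
  unfolding good_def by simp

lemma good_fst: "good M \<Phi> \<Longrightarrow> (\<lambda>x. fst (coord i (\<Phi> x))) \<in> borel_measurable M"
  unfolding good_def by simp

lemma good_snd: "good M \<Phi> \<Longrightarrow> (\<lambda>x. snd (coord i (\<Phi> x))) \<in> borel_measurable M"
  unfolding good_def by simp

lemma ilen_coord_meas:
  assumes "good M \<Phi>" shows "(\<lambda>x. ilen (coord i (\<Phi> x))) \<in> borel_measurable M"
  using good_fst[OF assms] good_snd[OF assms] unfolding ilen_def by (intro borel_measurable_diff)

lemma good_pred_lt:
  "good M \<Phi> \<Longrightarrow> Measurable.pred M (\<lambda>x. P (length (\<Phi> x)))"
  by (rule nat_fun_meas[OF good_len])

lemma good_stopped:
  assumes g: "good M \<Phi>" shows "Measurable.pred M (\<lambda>x. stopped xc (\<Phi> x))"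
proof -
  note [measurable] = ilen_coord_meas[OF g] good_pred_lt[OF g]
  show ?thesis unfolding stopped_coord by measurable
qed

lemma good_BB:
  assumes g: "good M \<Phi>" shows "Measurable.pred M (\<lambda>x. BB (\<Phi> x) i)"
proof -
  note [measurable] = ilen_coord_meas[OF g] good_pred_lt[OF g]
  show ?thesis unfolding BB_def by measurable
qed

lemma good_mm:
  assumes g: "good M \<Phi>" shows "(\<lambda>x. mm (\<Phi> x)) \<in> measurable M (count_space UNIV)"
proof -
  note [measurable] = good_BB[OF g]
  have e: "(\<lambda>x. mm (\<Phi> x)) = (\<lambda>x. if length (\<Phi> x) = 0 then 0 else LEAST i. BB (\<Phi> x) i)"
    unfolding mm_def by auto
  have [measurable]: "Measurable.pred M (\<lambda>x. length (\<Phi> x) = 0)" by (rule good_pred_lt[OF g])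
  show ?thesis unfolding e by measurable
qed

lemma good_at_index:
  assumes g: "good M \<Phi>" and h: "h \<in> measurable M (count_space UNIV)"
  shows "(\<lambda>x. fst (coord (h x) (\<Phi> x))) \<in> borel_measurable M"
    "(\<lambda>x. snd (coord (h x) (\<Phi> x))) \<in> borel_measurable M"
  by (rule measurable_compose_countable[OF _ h], rule good_fst[OF g],
      rule measurable_compose_countable[OF _ h], rule good_snd[OF g])

lemma good_step:
  assumes g: "good M \<Phi>" and v: "v \<in> borel_measurable M"
  shows "good M (\<lambda>x. if stopped xc (\<Phi> x) then \<Phi> x else stepS (v x) (\<Phi> x))"
proof -
  have ne: "\<not> stopped xc S \<Longrightarrow> S \<noteq> []" for S unfolding stopped_def by auto
  note [measurable] = good_stopped[OF g] v
  have m: "(\<lambda>x. mm (\<Phi> x)) \<in> measurable M (count_space UNIV)" by (rule good_mm[OF g])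
  note [measurable] = good_at_index[OF g m] good_fst[OF g] good_snd[OF g]
  have L[measurable]: "(\<lambda>x. length (\<Phi> x)) \<in> measurable M (count_space UNIV)" by (rule good_len[OF g])
  have len: "(\<lambda>x. length (if stopped xc (\<Phi> x) then \<Phi> x else stepS (v x) (\<Phi> x))) =
     (\<lambda>x. if stopped xc (\<Phi> x) then length (\<Phi> x) else Suc (length (\<Phi> x)))"
    using length_stepS ne by auto
  have "(\<lambda>x. length (if stopped xc (\<Phi> x) then \<Phi> x else stepS (v x) (\<Phi> x))) \<in> measurable M (count_space UNIV)"
    unfolding len by (intro measurable_If nat_fun_meas[OF L] L) simp
  moreover
  {
    fix i
    have idx: "(\<lambda>x. if i < mm (\<Phi> x) then i else Suc i) \<in> measurable M (count_space UNIV)"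
      by (rule nat_fun_meas[OF m])
    note [measurable] = good_at_index[OF g idx] good_pred_lt[OF g]
    have "(\<lambda>x. coord i (if stopped xc (\<Phi> x) then \<Phi> x else stepS (v x) (\<Phi> x))) =
      (\<lambda>x. if stopped xc (\<Phi> x) then coord i (\<Phi> x) else
    (if i + 1 < length (\<Phi> x) then coord (if i < mm (\<Phi> x) then i else Suc i) (\<Phi> x)
     else if i + 1 = length (\<Phi> x) then (fst (coord (mm (\<Phi> x)) (\<Phi> x)), fst (coord (mm (\<Phi> x)) (\<Phi> x)) + v x * ilen (coord (mm (\<Phi> x)) (\<Phi> x)))
     else if i = length (\<Phi> x) then (fst (coord (mm (\<Phi> x)) (\<Phi> x)) + v x * ilen (coord (mm (\<Phi> x)) (\<Phi> x)), snd (coord (mm (\<Phi> x)) (\<Phi> x)))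
     else (0,0)))" (is "_ = ?R")
      using coord_stepS ne by auto
    then have e1: "(\<lambda>x. fst (coord i (if stopped xc (\<Phi> x) then \<Phi> x else stepS (v x) (\<Phi> x)))) = (\<lambda>x. fst (?R x))"
      and e2: "(\<lambda>x. snd (coord i (if stopped xc (\<Phi> x) then \<Phi> x else stepS (v x) (\<Phi> x)))) = (\<lambda>x. snd (?R x))"
      by metis+
    have "(\<lambda>x. fst (coord i (if stopped xc (\<Phi> x) then \<Phi> x else stepS (v x) (\<Phi> x)))) \<in> borel_measurable M"
      unfolding e1 ilen_def by (simp only: fst_conv snd_conv if_distrib[of fst]) measurable
    moreover have "(\<lambda>x. snd (coord i (if stopped xc (\<Phi> x) then \<Phi> x else stepS (v x) (\<Phi> x)))) \<in> borel_measurable M"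
      unfolding e2 ilen_def by (simp only: fst_conv snd_conv if_distrib[of snd]) measurable
    ultimately have "(\<lambda>x. fst (coord i (if stopped xc (\<Phi> x) then \<Phi> x else stepS (v x) (\<Phi> x)))) \<in> borel_measurable M \<and>
       (\<lambda>x. snd (coord i (if stopped xc (\<Phi> x) then \<Phi> x else stepS (v x) (\<Phi> x)))) \<in> borel_measurable M" by simp
  }
  ultimately show ?thesis unfolding good_def by blast
qed

lemma kak_state_Suc: "kak_state xc u (Suc j) = (if stopped xc (kak_state xc u j) then kak_state xc u j else stepS (u j) (kak_state xc u j))"
  by (simp add: Let_def stepS_def)

lemma good_kak:
  assumes "\<And>i. (\<lambda>x. V x i) \<in> borel_measurable M"
  shows "good M (\<lambda>x. kak_state xc (V x) j)"
proof (induction j)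
  case 0
  show ?case unfolding good_def by (simp add: coord_def)
next
  case (Suc j)
  show ?case unfolding kak_state_Suc by (rule good_step[OF Suc assms])
qed

definition yin :: "real \<Rightarrow> real \<times> real \<Rightarrow> bool" where
  "yin y I \<longleftrightarrow> fst I < y \<and> y < snd I"

definition ys :: "real \<Rightarrow> real \<Rightarrow> (nat \<Rightarrow> real) \<Rightarrow> nat \<Rightarrow> bool" where
  "ys xc y u j \<longleftrightarrow> \<not> stopped xc (kak_state xc u j) \<and> yin y (largest (kak_state xc u j))"

definition cnt :: "real \<Rightarrow> real \<Rightarrow> (nat \<Rightarrow> real) \<Rightarrow> nat \<Rightarrow> nat" where
  "cnt xc y u j = card {i. i < j \<and> ys xc y u i}"

definition ww :: "real \<Rightarrow> real" where
  "ww t = min 1 (max t (1 - t))"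

definition PP :: "real \<Rightarrow> real \<Rightarrow> (nat \<Rightarrow> real) \<Rightarrow> nat \<Rightarrow> real" where
  "PP xc y u j = (\<Prod>i\<in>{i. i < j \<and> ys xc y u i}. ww (u i))"

lemma kak_local: "(\<And>i. i < j \<Longrightarrow> u i = v i) \<Longrightarrow> kak_state xc u j = kak_state xc v j"
  by (induction j) (auto simp: Let_def)

lemma ys_local: "(\<And>i. i < j \<Longrightarrow> u i = v i) \<Longrightarrow> ys xc y u j = ys xc y v j"
  unfolding ys_def using kak_local[of j u v xc] by simp

lemma cnt_local: "(\<And>i. i < j \<Longrightarrow> u i = v i) \<Longrightarrow> cnt xc y u j = cnt xc y v j"
proof -
  assume a: "\<And>i. i < j \<Longrightarrow> u i = v i"
  have "{i. i < j \<and> ys xc y u i} = {i. i < j \<and> ys xc y v i}"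
    using ys_local[of _ u v] a by auto
  then show ?thesis unfolding cnt_def by simp
qed

lemma nonstopped_largest:
  assumes "\<not> stopped xc S"
  shows "largest S \<in> set S" "xc < ilen (largest S)"
proof -
  have ne: "S \<noteq> []" using assms unfolding stopped_def by auto
  have le: "largest S = S ! mm S" by (rule largest_eq[OF ne])
  have B: "BB S (mm S)" and lt: "mm S < length S" using mm_props[OF ne] by auto
  show "largest S \<in> set S" using le lt by simp
  obtain i where i: "i < length S" "\<not> ilen (coord i S) \<le> xc" using assms unfolding stopped_coord by auto
  then show "xc < ilen (largest S)" using B le lt unfolding BB_def coord_def by force
qed

lemma ys_Suc_set: "{i. i < Suc j \<and> ys xc y u i} = (if ys xc y u j then insert j {i. i < j \<and> ys xc y u i} else {i. i < j \<and> ys xc y u i})"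
  by (auto simp: less_Suc_eq)

lemma PP_Suc: "PP xc y u (Suc j) = (if ys xc y u j then ww (u j) * PP xc y u j else PP xc y u j)"
  unfolding PP_def ys_Suc_set by simp

lemma cnt_Suc: "cnt xc y u (Suc j) = (if ys xc y u j then Suc (cnt xc y u j) else cnt xc y u j)"
  unfolding cnt_def ys_Suc_set by simp

lemma invariant:
  assumes u01: "\<And>i. 0 \<le> u i \<and> u i \<le> 1" and xc: "0 < xc"
  shows "length (filter (yin y) (kak_state xc u j)) \<le> 1 \<and>
         (\<forall>I\<in>set (kak_state xc u j). yin y I \<longrightarrow> ilen I \<le> PP xc y u j)"
proof (induction j)
  case 0
  show ?case by (simp add: PP_def ilen_def)
next
  case (Suc j)
  let ?S = "kak_state xc u j"
  show ?case
  proof (cases "stopped xc ?S")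
    case True
    then have "\<not> ys xc y u j" unfolding ys_def by simp
    then show ?thesis using Suc True by (simp add: kak_state_Suc PP_Suc)
  next
    case ns: False
    let ?L = "largest ?S" and ?t = "u j"
    have Lin: "?L \<in> set ?S" and Lxc: "xc < ilen ?L" using nonstopped_largest[OF ns] by auto
    define a where "a = fst ?L"
    define b where "b = snd ?L"
    define l where "l = ilen ?L"
    have l: "l = b - a" unfolding l_def a_def b_def ilen_def by simp
    have lpos: "0 < l" using Lxc xc l_def by simp
    have t: "0 \<le> ?t" "?t \<le> 1" using u01[of j] by auto
    have wt: "ww ?t = max ?t (1 - ?t)" using t unfolding ww_def by simp
    have S': "kak_state xc u (Suc j) = remove1 ?L ?S @ [(a, a + ?t * l), (a + ?t * l, b)]"
      using ns by (simp add: Let_def split_at_def a_def b_def l_def)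
    have fr: "filter (yin y) (remove1 ?L ?S) = remove1 ?L (filter (yin y) ?S)" by (rule filter_remove1)
    have lenr: "length (filter (yin y) (remove1 ?L ?S)) \<le> 1"
      unfolding fr using Suc.IH by (simp add: length_remove1)
    show ?thesis
    proof (cases "yin y ?L")
      case yL: True
      then have ysj: "ys xc y u j" unfolding ys_def using ns by simp
      have PPs: "PP xc y u (Suc j) = ww ?t * PP xc y u j" using ysj by (simp add: PP_Suc)
      have LP: "l \<le> PP xc y u j" using Suc.IH Lin yL l_def by auto
      have "?L \<in> set (filter (yin y) ?S)" using Lin yL by simp
      then have "length (filter (yin y) (remove1 ?L ?S)) = 0"
        unfolding fr using Suc.IH by (simp add: length_remove1)
      then have none: "\<forall>I\<in>set (remove1 ?L ?S). \<not> yin y I"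
        by (metis filter_empty_conv length_0_conv)
      have ab: "a < y" "y < b" using yL unfolding yin_def a_def b_def by auto
      have c1: "length (filter (yin y) [(a, a + ?t * l), (a + ?t * l, b)]) \<le> 1"
        by (auto simp: yin_def)
      have b1: "ilen (a, a + ?t * l) \<le> ww ?t * PP xc y u j"
      proof -
        have "ilen (a, a + ?t * l) = ?t * l" by (simp add: ilen_def)
        also have "\<dots> \<le> ww ?t * l" using lpos wt by (intro mult_right_mono) auto
        also have "\<dots> \<le> ww ?t * PP xc y u j" using LP wt t by (intro mult_left_mono) auto
        finally show ?thesis .
      qed
      have b2: "ilen (a + ?t * l, b) \<le> ww ?t * PP xc y u j"
      proof -
        have "ilen (a + ?t * l, b) = (1 - ?t) * l" by (simp add: ilen_def l algebra_simps)
        also have "\<dots> \<le> ww ?t * l" using lpos wt by (intro mult_right_mono) auto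
        also have "\<dots> \<le> ww ?t * PP xc y u j" using LP wt t by (intro mult_left_mono) auto
        finally show ?thesis .
      qed
      have "filter (yin y) (remove1 ?L ?S) = []" using none by (simp add: filter_empty_conv)
      then show ?thesis unfolding S' PPs using c1 b1 b2 none by auto
    next
      case nyL: False
      then have ysj: "\<not> ys xc y u j" unfolding ys_def by simp
      have PPs: "PP xc y u (Suc j) = PP xc y u j" using ysj by (simp add: PP_Suc)
      have "\<not> (a < y \<and> y < b)" using nyL unfolding yin_def a_def b_def by auto
      moreover have "0 \<le> ?t * l" "?t * l \<le> l" using t lpos by (auto simp: mult_left_le_one_le)
      ultimately have n12: "\<not> yin y (a, a + ?t * l)" "\<not> yin y (a + ?t * l, b)"
        unfolding yin_def using l by auto
      have sub: "set (remove1 ?L ?S) \<subseteq> set ?S" by (rule set_remove1_subset)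
      show ?thesis unfolding S' PPs using n12 lenr sub Suc.IH by auto
    qed
  qed
qed

lemma ys_PP:
  assumes u01: "\<And>i. 0 \<le> u i \<and> u i \<le> 1" and xc: "0 < xc" and ys: "ys xc y u j"
  shows "xc < PP xc y u j"
proof -
  have ns: "\<not> stopped xc (kak_state xc u j)" and yL: "yin y (largest (kak_state xc u j))"
    using ys unfolding ys_def by auto
  show ?thesis using nonstopped_largest[OF ns] invariant[OF u01 xc, where y=y and j=j] yL by force
qed

lemma cnt_mono: "i \<le> j \<Longrightarrow> cnt xc y u i \<le> cnt xc y u j"
  unfolding cnt_def by (intro card_mono) auto

lemma cnt_strict: "i < j \<Longrightarrow> ys xc y u i \<Longrightarrow> cnt xc y u i < cnt xc y u j"
  unfolding cnt_def by (intro psubset_card_mono) auto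

definition fac :: "real \<Rightarrow> real \<Rightarrow> nat \<Rightarrow> real \<Rightarrow> (nat \<Rightarrow> real) \<Rightarrow> nat \<Rightarrow> real" where
  "fac xc y k \<rho> u i = (if ys xc y u i \<and> cnt xc y u i < k then ww (u i) / \<rho> else 1)"

definition QQ :: "real \<Rightarrow> real \<Rightarrow> nat \<Rightarrow> real \<Rightarrow> (nat \<Rightarrow> real) \<Rightarrow> nat \<Rightarrow> real" where
  "QQ xc y k \<rho> u N = (\<Prod>i<N. fac xc y k \<rho> u i)"

lemma QQ_big:
  assumes u01: "\<And>i. 0 \<le> u i \<and> u i \<le> 1" and xc: "0 < xc" and rho: "0 < \<rho>"
    and ys: "ys xc y u j" and c: "cnt xc y u j = k" and jN: "j < N"
  shows "xc / \<rho> ^ k < QQ xc y k \<rho> u N"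
proof -
  have set_eq: "{i \<in> {..<N}. ys xc y u i \<and> cnt xc y u i < k} = {i. i < j \<and> ys xc y u i}"
  proof (intro set_eqI iffI)
    fix i assume i: "i \<in> {i \<in> {..<N}. ys xc y u i \<and> cnt xc y u i < k}"
    have "i < j"
    proof (rule ccontr)
      assume "\<not> i < j" then have "cnt xc y u j \<le> cnt xc y u i" by (intro cnt_mono) simp
      then show False using i c by simp
    qed
    then show "i \<in> {i. i < j \<and> ys xc y u i}" using i by simp
  next
    fix i assume i: "i \<in> {i. i < j \<and> ys xc y u i}"
    then show "i \<in> {i \<in> {..<N}. ys xc y u i \<and> cnt xc y u i < k}"
      using cnt_strict[of i j xc y u] c jN by auto
  qed
  have "QQ xc y k \<rho> u N = (\<Prod>i\<in>{i \<in> {..<N}. ys xc y u i \<and> cnt xc y u i < k}. ww (u i) / \<rho>)"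
    unfolding QQ_def fac_def by (subst prod.inter_filter) auto
  also have "\<dots> = (\<Prod>i\<in>{i. i < j \<and> ys xc y u i}. ww (u i) / \<rho>)" unfolding set_eq ..
  also have "\<dots> = PP xc y u j / \<rho> ^ k"
    unfolding PP_def prod_dividef using c unfolding cnt_def by simp
  finally have e: "QQ xc y k \<rho> u N = PP xc y u j / \<rho> ^ k" .
  show ?thesis unfolding e using ys_PP[OF u01 xc ys] rho by (simp add: divide_strict_right_mono)
qed

lemma K_exists:
  assumes "k < kak_K xc y u"
  shows "\<exists>j. ys xc y u j \<and> cnt xc y u j = k"
proof -
  have KK: "kak_K xc y u = card {j. ys xc y u j}" unfolding kak_K_def ys_def yin_def by simp
  have fin: "finite {j. ys xc y u j}" using assms KK card.infinite by fastforce
  then obtain B where B: "{j. ys xc y u j} \<subseteq> {..<B}"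
    by (meson finite_nat_iff_bounded)
  have "cnt xc y u B = card {j. ys xc y u j}" unfolding cnt_def
    using B by (intro arg_cong[where f=card]) auto
  then have ex: "k < cnt xc y u B" using assms KK by simp
  define n where "n = (LEAST n. k < cnt xc y u n)"
  have n1: "k < cnt xc y u n" unfolding n_def using ex by (rule LeastI)
  have n0: "n \<noteq> 0"
  proof
    assume "n = 0" with n1 show False by (simp add: cnt_def)
  qed
  then obtain j where j: "n = Suc j" by (cases n) auto
  have "\<not> k < cnt xc y u j" unfolding n_def by (rule not_less_Least) (simp add: j[unfolded n_def])
  then show ?thesis using n1 unfolding j cnt_Suc by (auto split: if_splits)
qed

lemma ys_alt: "ys xc y u j \<longleftrightarrow> \<not> stopped xc (kak_state xc u j) \<and>
   fst (coord (mm (kak_state xc u j)) (kak_state xc u j)) < y \<and>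
   y < snd (coord (mm (kak_state xc u j)) (kak_state xc u j))"
proof -
  have "largest S = coord (mm S) S" if ns: "\<not> stopped xc S" for S
  proof -
    have ne: "S \<noteq> []" using ns unfolding stopped_def by auto
    show ?thesis using largest_eq[OF ne] mm_props(3)[OF ne] unfolding coord_def by simp
  qed
  then show ?thesis unfolding ys_def yin_def by auto
qed

context
  fixes M :: "'b measure" and V :: "'b \<Rightarrow> nat \<Rightarrow> real"
  assumes Vm: "\<And>i. (\<lambda>x. V x i) \<in> borel_measurable M"
begin

lemma ys_meas: "Measurable.pred M (\<lambda>x. ys xc y (V x) j)"
proof -
  have g: "good M (\<lambda>x. kak_state xc (V x) j)" by (rule good_kak[OF Vm])
  note [measurable] = good_stopped[OF g] good_at_index[OF g good_mm[OF g]]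
  show ?thesis unfolding ys_alt by measurable
qed

lemma cnt_meas: "(\<lambda>x. cnt xc y (V x) j) \<in> measurable M (count_space UNIV)"
proof (induction j)
  case 0
  show ?case by (simp add: cnt_def)
next
  case (Suc j)
  note [measurable] = ys_meas
  show ?case unfolding cnt_Suc
    by (intro measurable_If nat_fun_meas[OF Suc] Suc) simp
qed

lemma cnt_lt_meas: "Measurable.pred M (\<lambda>x. cnt xc y (V x) j < k)"
  by (rule nat_fun_meas[OF cnt_meas])

lemma ww_meas: "(\<lambda>x. ww (V x i)) \<in> borel_measurable M"
  using Vm[of i] unfolding ww_def by measurable

lemma fac_meas: "(\<lambda>x. fac xc y k \<rho> (V x) i) \<in> borel_measurable M"
proof -
  note [measurable] = ys_meas cnt_lt_meas ww_meas
  show ?thesis unfolding fac_def by measurable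
qed

lemma QQ_meas: "(\<lambda>x. QQ xc y k \<rho> (V x) N) \<in> borel_measurable M"
proof -
  note [measurable] = fac_meas
  show ?thesis unfolding QQ_def by measurable
qed

end

lemma ww_bounds: "1/2 \<le> ww t" "ww t \<le> 1"
  unfolding ww_def by (auto simp: max_def)

lemma fac_bounds: "0 < \<rho> \<Longrightarrow> 0 \<le> fac xc y k \<rho> u i" "0 < \<rho> \<Longrightarrow> \<rho> \<le> 1 \<Longrightarrow> fac xc y k \<rho> u i \<le> 1 / \<rho>"
  unfolding fac_def using ww_bounds[of "u i"] by (auto simp: divide_right_mono)

lemma QQ_bounds: "0 < \<rho> \<Longrightarrow> 0 \<le> QQ xc y k \<rho> u N" "0 < \<rho> \<Longrightarrow> \<rho> \<le> 1 \<Longrightarrow> QQ xc y k \<rho> u N \<le> (1 / \<rho>) ^ N"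
proof -
  assume r: "0 < \<rho>"
  show "0 \<le> QQ xc y k \<rho> u N" unfolding QQ_def using fac_bounds(1)[OF r] by (intro prod_nonneg) auto
  assume r1: "\<rho> \<le> 1"
  have "QQ xc y k \<rho> u N \<le> (\<Prod>i<N. 1 / \<rho>)" unfolding QQ_def
    using fac_bounds[OF r] r1 by (intro prod_mono) auto
  then show "QQ xc y k \<rho> u N \<le> (1 / \<rho>) ^ N" by simp
qed

lemma QQ_Suc: "QQ xc y k \<rho> u (Suc N) = QQ xc y k \<rho> u N * fac xc y k \<rho> u N"
  unfolding QQ_def by simp

lemma QQ_local: "(\<And>i. i < N \<Longrightarrow> u i = v i) \<Longrightarrow> QQ xc y k \<rho> u N = QQ xc y k \<rho> v N"
proof -
  assume a: "\<And>i. i < N \<Longrightarrow> u i = v i"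
  have "fac xc y k \<rho> u i = fac xc y k \<rho> v i" if "i < N" for i
    unfolding fac_def using ys_local[of i u v] cnt_local[of i u v] a that by simp
  then show ?thesis unfolding QQ_def by (intro prod.cong) auto
qed

definition rr :: real where "rr = 7/8"

lemma rr: "0 < rr" "rr \<le> 1" "rr < 1" unfolding rr_def by auto

context prob_space
begin

context
  fixes U :: "nat \<Rightarrow> 'a \<Rightarrow> real"
  assumes indep: "indep_vars (\<lambda>_. borel) U UNIV"
    and unif: "\<And>i. distr M lborel (U i) = uniform_measure lborel {0..1}"
begin

lemma Um[measurable]: "U i \<in> borel_measurable M"
  using indep unfolding indep_vars_def by auto

lemma Um': "(\<lambda>x. U i x) \<in> borel_measurable M"
  using Um by simp

lemma prob_U:
  assumes "0 \<le> a" "a \<le> b" "b \<le> 1"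
  shows "prob {\<omega>\<in>space M. U i \<omega> \<in> {a..b}} = b - a"
proof -
  have "emeasure M {\<omega>\<in>space M. U i \<omega> \<in> {a..b}} = emeasure M (U i -` {a..b} \<inter> space M)"
    by (intro arg_cong[where f="emeasure M"]) auto
  also have "\<dots> = emeasure (distr M lborel (U i)) {a..b}"
    by (rule emeasure_distr[symmetric]) auto
  also have "\<dots> = emeasure lborel ({0..1} \<inter> {a..b}) / emeasure lborel {0..1::real}"
    unfolding unif by simp
  also have "{0..1} \<inter> {a..b} = {a..b::real}" using assms by auto
  also have "emeasure lborel {a..b} / emeasure lborel {0..1::real} = ennreal (b - a)"
    using assms by (simp add: divide_ennreal_def)
  finally show ?thesis by (simp add: measure_def assms)
qed

lemma AE01: "AE \<omega> in M. \<forall>i. 0 \<le> U i \<omega> \<and> U i \<omega> \<le> 1"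
proof -
  have "AE \<omega> in M. 0 \<le> U i \<omega> \<and> U i \<omega> \<le> 1" for i
  proof -
    have "AE \<omega> in M. \<omega> \<in> {\<omega>\<in>space M. U i \<omega> \<in> {0..1}}"
      by (rule AE_prob_1) (use prob_U[of 0 1 i] in simp)
    then show ?thesis by eventually_elim auto
  qed
  then show ?thesis by (simp add: AE_all_countable)
qed

lemma E_ww: "expectation (\<lambda>\<omega>. ww (U i \<omega>)) \<le> 7/8"
proof -
  define A where "A = {\<omega>\<in>space M. U i \<omega> \<in> {1/4..3/4}}"
  have A[measurable]: "A \<in> sets M" unfolding A_def by measurable
  have pA: "prob A = 1/2" unfolding A_def by (subst prob_U) auto
  have ae: "AE \<omega> in M. ww (U i \<omega>) \<le> 1 - (1/4) * indicator A \<omega>"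
    using AE01
  proof eventually_elim
    case (elim \<omega>)
    then have "0 \<le> U i \<omega>" "U i \<omega> \<le> 1" by auto
    then show ?case unfolding ww_def A_def indicator_def by (auto simp: max_def)
  qed
  have int1: "integrable M (\<lambda>\<omega>. ww (U i \<omega>))"
    by (rule integrable_const_bound[where B=1])
       (auto simp: ww_def intro!: ww_meas[of "\<lambda>x i. U i x" M, OF Um'])
  have int2: "integrable M (\<lambda>\<omega>. 1 - (1/4) * indicator A \<omega> :: real)"
    using A by (intro integrable_const_bound[where B=1]) (auto simp: indicator_def)
  have "expectation (\<lambda>\<omega>. ww (U i \<omega>)) \<le> expectation (\<lambda>\<omega>. 1 - (1/4) * indicator A \<omega> :: real)"
    by (rule integral_mono_AE[OF int1 int2 ae])
  also have "\<dots> = 1 - (1/4) * prob A"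
  proof -
    have i1: "integrable M (\<lambda>\<omega>. (1/4) * indicator A \<omega> :: real)"
      using A by (intro integrable_const_bound[where B=1]) (auto simp: indicator_def)
    have "A \<inter> space M = A" using A by (simp add: sets.Int_space_eq2)
    then show ?thesis
      by (subst Bochner_Integration.integral_diff[OF integrable_const i1]) (simp add: prob_space)
  qed
  also have "\<dots> = 7/8" using pA by simp
  finally show ?thesis .
qed


lemma E_QQ: "expectation (\<lambda>\<omega>. QQ xc y k rr (\<lambda>i. U i \<omega>) N) \<le> 1"
proof (induction N)
  case 0
  show ?case by (simp add: QQ_def prob_space)
next
  case (Suc N)
  define Q where "Q = (\<lambda>\<omega>. QQ xc y k rr (\<lambda>i. U i \<omega>) N)"
  define c where "c = (\<lambda>\<omega>. ys xc y (\<lambda>i. U i \<omega>) N \<and> cnt xc y (\<lambda>i. U i \<omega>) N < k)"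
  define X where "X = (\<lambda>\<omega>. Q \<omega> * (if c \<omega> then 1 else 0 :: real))"
  define Z where "Z = (\<lambda>\<omega>. ww (U N \<omega>) / rr)"
  have Qm[measurable]: "Q \<in> borel_measurable M" unfolding Q_def by (rule QQ_meas[OF Um'])
  have cm[measurable]: "Measurable.pred M c" unfolding c_def
    using ys_meas[OF Um'] cnt_lt_meas[OF Um'] by measurable
  have Zm[measurable]: "Z \<in> borel_measurable M" unfolding Z_def using ww_meas[OF Um'] by measurable
  have Xm[measurable]: "X \<in> borel_measurable M" unfolding X_def by measurable
  have Qb: "norm (Q \<omega>) \<le> (1/rr)^N" for \<omega> unfolding Q_def using QQ_bounds[OF rr(1), of xc y k] rr by auto
  have intQ: "integrable M Q" by (rule integrable_const_bound[where B="(1/rr)^N"]) (use Qb in \<open>auto intro!: AE_I2\<close>)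
  have intX: "integrable M X"
    by (rule integrable_const_bound[where B="(1/rr)^N"]) (use Qb rr in \<open>auto simp: X_def intro!: AE_I2\<close>)
  have intZ: "integrable M Z"
  proof (rule integrable_const_bound[where B="1/rr"])
    show "Z \<in> borel_measurable M" by (rule Zm)
    have "norm (Z \<omega>) \<le> 1/rr" for \<omega>
    proof -
      have "0 \<le> ww (U N \<omega>)" "ww (U N \<omega>) \<le> 1" using ww_bounds[of "U N \<omega>"] by auto
      then show ?thesis using rr unfolding Z_def by (simp add: divide_right_mono)
    qed
    then show "AE x in M. norm (Z x) \<le> 1/rr" by simp
  qed
  have Xnn: "0 \<le> X \<omega>" for \<omega> unfolding X_def Q_def using QQ_bounds(1)[OF rr(1)] by auto
  have EZ: "expectation Z \<le> 1"
  proof -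
    have "expectation Z = expectation (\<lambda>\<omega>. ww (U N \<omega>)) / rr" unfolding Z_def by simp
    also have "\<dots> \<le> (7/8) / rr" using E_ww[of N] rr by (intro divide_right_mono) auto
    finally show ?thesis by (simp add: rr_def)
  qed
  define ext where "ext = (\<lambda>f::nat \<Rightarrow> real. \<lambda>i. if i < N then f i else 0)"
  define g1 where "g1 = (\<lambda>f. QQ xc y k rr (ext f) N * (if ys xc y (ext f) N \<and> cnt xc y (ext f) N < k then 1 else 0 :: real))"
  define g2 where "g2 = (\<lambda>f::nat \<Rightarrow> real. ww (f N) / rr)"
  have extm: "(\<lambda>f. ext f i) \<in> borel_measurable (PiM {..<N} (\<lambda>_. borel))" for i
    by (cases "i < N") (auto simp: ext_def)
  have g1m: "g1 \<in> borel_measurable (PiM {..<N} (\<lambda>_. borel))"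
    unfolding g1_def using QQ_meas[OF extm] ys_meas[OF extm] cnt_lt_meas[OF extm] by measurable
  have g2m: "g2 \<in> borel_measurable (PiM {N} (\<lambda>_. borel))"
  proof -
    have "(\<lambda>f::nat \<Rightarrow> real. f N) \<in> borel_measurable (PiM {N} (\<lambda>_. borel))" by simp
    then show ?thesis unfolding g2_def ww_def by measurable
  qed
  have iv: "indep_var (PiM {..<N} (\<lambda>_. borel)) (\<lambda>\<omega>. restrict (\<lambda>i. U i \<omega>) {..<N})
                      (PiM {N} (\<lambda>_. borel)) (\<lambda>\<omega>. restrict (\<lambda>i. U i \<omega>) {N})"
    by (rule indep_var_restrict[OF indep]) auto
  have iv2: "indep_var borel (g1 \<circ> (\<lambda>\<omega>. restrict (\<lambda>i. U i \<omega>) {..<N})) borel (g2 \<circ> (\<lambda>\<omega>. restrict (\<lambda>i. U i \<omega>) {N}))"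
    by (rule indep_var_compose[OF iv g1m g2m])
  have loc: "\<And>i. i < N \<Longrightarrow> ext (restrict (\<lambda>i. U i \<omega>) {..<N}) i = U i \<omega>" for \<omega>
    by (simp add: ext_def)
  have eX: "g1 \<circ> (\<lambda>\<omega>. restrict (\<lambda>i. U i \<omega>) {..<N}) = X"
  proof
    fix \<omega>
    show "(g1 \<circ> (\<lambda>\<omega>. restrict (\<lambda>i. U i \<omega>) {..<N})) \<omega> = X \<omega>"
    proof -
      have l1: "\<And>i. i < N \<Longrightarrow> ext (restrict (\<lambda>i. U i \<omega>) {..<N}) i = (\<lambda>i. U i \<omega>) i"
        by (simp add: ext_def)
      show ?thesis
        unfolding comp_def g1_def X_def Q_def c_def
        using QQ_local[OF l1] ys_local[OF l1] cnt_local[OF l1] by simp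
    qed
  qed
  have eZ: "g2 \<circ> (\<lambda>\<omega>. restrict (\<lambda>i. U i \<omega>) {N}) = Z"
    by (auto simp: g2_def Z_def)
  have ind: "indep_var borel X borel Z" using iv2 unfolding eX eZ .
  have EXZ: "expectation (\<lambda>\<omega>. X \<omega> * Z \<omega>) = expectation X * expectation Z"
    by (rule indep_var_lebesgue_integral[OF ind intX intZ])
  have intXZ: "integrable M (\<lambda>\<omega>. X \<omega> * Z \<omega>)"
    by (rule indep_var_integrable[OF ind intX intZ])
  have eQ: "(\<lambda>\<omega>. QQ xc y k rr (\<lambda>i. U i \<omega>) (Suc N)) = (\<lambda>\<omega>. (Q \<omega> - X \<omega>) + X \<omega> * Z \<omega>)"
    by (auto simp: QQ_Suc fac_def Q_def X_def Z_def c_def)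
  have "expectation (\<lambda>\<omega>. QQ xc y k rr (\<lambda>i. U i \<omega>) (Suc N)) = (expectation Q - expectation X) + expectation X * expectation Z"
    unfolding eQ
    by (subst Bochner_Integration.integral_add)
       (auto intro!: Bochner_Integration.integrable_diff intQ intX intXZ
             simp: Bochner_Integration.integral_diff[OF intQ intX] EXZ)
  also have "\<dots> \<le> expectation Q"
  proof -
    have "0 \<le> expectation X" using Xnn by (simp add: integral_nonneg)
    then have "expectation X * expectation Z \<le> expectation X" using EZ
      by (simp add: mult_left_le)
    then show ?thesis by simp
  qed
  also have "\<dots> \<le> 1" using Suc.IH unfolding Q_def .
  finally show ?case .
qed


lemma main_bound:
  assumes xc: "0 < xc" and SS: "SS \<subseteq> {\<omega>\<in>space M. k < kak_K xc y (\<lambda>i. U i \<omega>)}"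
  shows "measure M SS \<le> rr ^ k / xc"
proof -
  define E where "E = (\<lambda>N. {\<omega>\<in>space M. \<exists>j<N. ys xc y (\<lambda>i. U i \<omega>) j \<and> cnt xc y (\<lambda>i. U i \<omega>) j = k})"
  have Em: "E N \<in> sets M" for N
  proof -
    note [measurable] = ys_meas[OF Um'] cnt_meas[OF Um']
    show ?thesis unfolding E_def by measurable
  qed
  have EN: "measure M (E N) \<le> rr ^ k / xc" for N
  proof -
    define B where "B = rr ^ k / xc"
    have Bpos: "0 < B" unfolding B_def using rr xc by simp
    have Qm[measurable]: "(\<lambda>\<omega>. QQ xc y k rr (\<lambda>i. U i \<omega>) N) \<in> borel_measurable M" by (rule QQ_meas[OF Um'])
    have Qb: "norm (QQ xc y k rr (\<lambda>i. U i \<omega>) N) \<le> (1/rr)^N" for \<omega> using QQ_bounds[OF rr(1), of xc y k] rr by auto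
    have intQ: "integrable M (\<lambda>\<omega>. QQ xc y k rr (\<lambda>i. U i \<omega>) N)"
      by (rule integrable_const_bound[where B="(1/rr)^N"]) (use Qb in \<open>auto intro!: AE_I2\<close>)
    have intI: "integrable M (indicator (E N) :: 'a \<Rightarrow> real)"
      using Em by (intro integrable_const_bound[where B=1]) (auto simp: indicator_def)
    have ae: "AE \<omega> in M. indicator (E N) \<omega> \<le> QQ xc y k rr (\<lambda>i. U i \<omega>) N * B"
      using AE01
    proof eventually_elim
      case (elim \<omega>)
      have u01: "\<And>i. 0 \<le> U i \<omega> \<and> U i \<omega> \<le> 1" using elim by auto
      show ?case
      proof (cases "\<omega> \<in> E N")
        case True
        then obtain j where j: "j < N" "ys xc y (\<lambda>i. U i \<omega>) j" "cnt xc y (\<lambda>i. U i \<omega>) j = k"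
          unfolding E_def by auto
        have "xc / rr ^ k < QQ xc y k rr (\<lambda>i. U i \<omega>) N"
          by (rule QQ_big[OF u01 xc rr(1) j(2) j(3) j(1)])
        then have "1 \<le> QQ xc y k rr (\<lambda>i. U i \<omega>) N * B"
          unfolding B_def using rr xc by (simp add: field_simps)
        then show ?thesis using True by simp
      next
        case False
        then show ?thesis using QQ_bounds(1)[OF rr(1)] Bpos by simp
      qed
    qed
    have "measure M (E N) = expectation (indicator (E N) :: 'a \<Rightarrow> real)"
      using Em by (simp add: sets.Int_space_eq2)
    also have "\<dots> \<le> expectation (\<lambda>\<omega>. QQ xc y k rr (\<lambda>i. U i \<omega>) N * B)"
      by (rule integral_mono_AE[OF intI _ ae]) (intro integrable_mult_left intQ)
    also have "\<dots> = expectation (\<lambda>\<omega>. QQ xc y k rr (\<lambda>i. U i \<omega>) N) * B" by simp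
    also have "\<dots> \<le> 1 * B" using E_QQ[of xc y k N] Bpos by (intro mult_right_mono) auto
    finally show ?thesis unfolding B_def by simp
  qed
  have inc: "incseq E" unfolding incseq_def E_def by (blast intro: order_less_le_trans)
  have lim: "(\<lambda>N. measure M (E N)) \<longlonglongrightarrow> measure M (\<Union>N. E N)"
    by (rule finite_Lim_measure_incseq) (use Em inc in auto)
  have U: "measure M (\<Union>N. E N) \<le> rr ^ k / xc"
    by (rule LIMSEQ_le_const2[OF lim]) (use EN in auto)
  have sub: "{\<omega>\<in>space M. k < kak_K xc y (\<lambda>i. U i \<omega>)} \<subseteq> (\<Union>N. E N)"
  proof
    fix \<omega> assume "\<omega> \<in> {\<omega>\<in>space M. k < kak_K xc y (\<lambda>i. U i \<omega>)}"
    then have sp: "\<omega> \<in> space M" and "k < kak_K xc y (\<lambda>i. U i \<omega>)" by auto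
    then obtain j where "ys xc y (\<lambda>i. U i \<omega>) j \<and> cnt xc y (\<lambda>i. U i \<omega>) j = k"
      using K_exists by blast
    then have "\<omega> \<in> E (Suc j)" unfolding E_def using sp by auto
    then show "\<omega> \<in> (\<Union>N. E N)" by blast
  qed
  have "measure M SS \<le> measure M (\<Union>N. E N)"
    by (rule finite_measure_mono[OF order.trans[OF SS sub]]) (use Em in auto)
  then show ?thesis using U by simp
qed

end
end

theorem lemma1:
  fixes y :: real and A :: real
  assumes "0 < y" "y < 1" "0 < A"
  shows "\<exists>C D::real. \<forall>(M::'a measure) (U :: nat \<Rightarrow> 'a \<Rightarrow> real) (xc::real).
     prob_space M \<and> prob_space.indep_vars M (\<lambda>_. borel) U UNIV \<and>
     (\<forall>i. distr M lborel (U i) = uniform_measure lborel {0..1}) \<and>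
     0 < xc \<and> xc < 1 \<longrightarrow>
     measure M {\<omega> \<in> space M. real (kak_K xc y (\<lambda>i. U i \<omega>)) > C * ln (1 / xc)}
       \<le> D * xc powr A"
proof -
  define a where "a = ln (8/7::real)"
  have apos: "0 < a" unfolding a_def by simp
  have rra: "rr = exp (- a)" unfolding a_def rr_def by (simp add: exp_minus)
  define C where "C = (A + 1) / a"
  have Cpos: "0 < C" unfolding C_def using apos assms by simp
  have key: "measure M {\<omega> \<in> space M. real (kak_K xc y (\<lambda>i. U i \<omega>)) > C * ln (1 / xc)} \<le> 8/7 * xc powr A"
    if ps: "prob_space M" and ind: "prob_space.indep_vars M (\<lambda>_. borel) U UNIV"
      and un: "\<forall>i. distr M lborel (U i) = uniform_measure lborel {0..1}" and xc: "0 < xc" "xc < 1"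
    for M :: "'a measure" and U :: "nat \<Rightarrow> 'a \<Rightarrow> real" and xc :: real
  proof -
    interpret prob_space M by (rule ps)
    define L where "L = ln (1 / xc)"
    have Lpos: "0 < L" unfolding L_def using xc by simp
    have lnxc: "ln xc = - L" unfolding L_def using xc by (simp add: ln_div)
    define k where "k = nat \<lfloor>C * L\<rfloor>"
    have CL: "0 \<le> C * L" using Cpos Lpos by simp
    have kle: "real k \<le> C * L" unfolding k_def using CL by linarith
    have kge: "C * L - 1 \<le> real k" unfolding k_def using CL by linarith
    have sub: "{\<omega> \<in> space M. real (kak_K xc y (\<lambda>i. U i \<omega>)) > C * ln (1 / xc)}
        \<subseteq> {\<omega>\<in>space M. k < kak_K xc y (\<lambda>i. U i \<omega>)}"
      using kle unfolding L_def by auto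
    have mb: "measure M {\<omega> \<in> space M. real (kak_K xc y (\<lambda>i. U i \<omega>)) > C * ln (1 / xc)} \<le> rr ^ k / xc"
      by (rule main_bound[OF ind _ xc(1) sub]) (use un in auto)
    have "rr ^ k = exp (- a * real k)" unfolding rra
      by (simp add: exp_of_nat_mult[symmetric] mult.commute)
    also have "\<dots> \<le> exp (a - (A + 1) * L)"
    proof -
      have "- a * real k \<le> - a * (C * L - 1)" using kge apos by (intro mult_left_mono_neg) auto
      also have "\<dots> = a - (A + 1) * L" unfolding C_def using apos by (simp add: field_simps)
      finally show ?thesis by simp
    qed
    finally have rk: "rr ^ k \<le> exp (a - (A + 1) * L)" .
    have "rr ^ k / xc \<le> exp (a - (A + 1) * L) / xc" using rk xc by (intro divide_right_mono) auto
    also have "\<dots> = exp a * exp (A * ln xc)"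
    proof -
      have e: "xc = exp (- L)" using xc lnxc by (metis exp_ln)
      have "exp (a - (A + 1) * L) / xc = exp (a - (A + 1) * L - (- L))"
        by (subst e) (simp only: exp_diff)
      also have "\<dots> = exp (a + A * (- L))" by (simp add: algebra_simps)
      also have "\<dots> = exp a * exp (A * ln xc)" unfolding lnxc by (rule exp_add)
      finally show ?thesis .
    qed
    also have "\<dots> = 8/7 * xc powr A" unfolding a_def using xc by (simp add: powr_def)
    finally show "measure M {\<omega> \<in> space M. real (kak_K xc y (\<lambda>i. U i \<omega>)) > C * ln (1 / xc)} \<le> 8/7 * xc powr A"
      using mb by linarith
  qed
  show ?thesis by (intro exI[of _ C] exI[of _ "8/7"] allI impI, elim conjE) (rule key)
qed

end
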